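(* Let $0<a_1<a_2<\cdots<a_n$, $A_i:=a_1+\cdots+a_i$, $A_{i:j}:=\sum_{k=i}^ja_k$, and for a permutation $\pi$ of $\{1,\dots,n\}$, $A_{\pi(i)}:=a_{\pi(1)}+\cdots+a_{\pi(i)}$. Let $f$ be a positive differentiable function on $[0,\infty)$ with $0<\inf f\le\sup f<\infty$. (i) If $f$ is strictly decreasing on $[0,A_n]$, then $$\sum_{i=1}^n a_i\int_0^{A_i}f(s)\,ds<\sum_{i=1}^n a_{\pi(i)}\int_0^{A_{\pi(i)}}f(s)\,ds$$ for every permutation $\pi$ with $(\pi(1),\dots,\pi(n))\ne(1,2,\dots,n)$. (ii) If $f$ is strictly increasing on $[0,A_n]$, then $$\sum_{i=1}^n a_{n+1-i}\int_0^{A_{n+1-i:n}}f(s)\,ds<\sum_{i=1}^n a_{\pi(i)}\int_0^{A_{\pi(i)}}f(s)\,ds$$ for every permutation $\pi$ with $(\pi(1),\dots,\pi(n))\ne(n,n-1,\dots,1)$. *)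

theory Defs
  imports "HOL-Analysis.Analysis"
begin

end

theory Submission
  imports Defs
begin

lemma int_bounds:
  fixes f :: "real \<Rightarrow> real"
  assumes cont: "continuous_on {0..T} f" and "0 \<le> c" "c \<le> d" "d \<le> T"
  shows "f integrable_on {c..d}"
    "(\<And>u v. 0 \<le> u \<Longrightarrow> u \<le> v \<Longrightarrow> v \<le> T \<Longrightarrow> f v \<le> f u) \<Longrightarrow> integral {c..d} f \<le> (d - c) * f c"
    "(\<And>u v. 0 \<le> u \<Longrightarrow> u \<le> v \<Longrightarrow> v \<le> T \<Longrightarrow> f v \<le> f u) \<Longrightarrow> (d - c) * f d \<le> integral {c..d} f"
    "(\<And>u v. 0 \<le> u \<Longrightarrow> u \<le> v \<Longrightarrow> v \<le> T \<Longrightarrow> f u \<le> f v) \<Longrightarrow> integral {c..d} f \<le> (d - c) * f d"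
    "(\<And>u v. 0 \<le> u \<Longrightarrow> u \<le> v \<Longrightarrow> v \<le> T \<Longrightarrow> f u \<le> f v) \<Longrightarrow> (d - c) * f c \<le> integral {c..d} f"
proof -
  have ci: "continuous_on {c..d} f" using cont assms by (auto intro: continuous_on_subset)
  show I: "f integrable_on {c..d}" using integrable_continuous_real[OF ci] .
  have K: "integral {c..d} (\<lambda>x. k) = (d - c) * k" for k using assms by simp
  show "integral {c..d} f \<le> (d - c) * f c" if m: "\<And>u v. 0 \<le> u \<Longrightarrow> u \<le> v \<Longrightarrow> v \<le> T \<Longrightarrow> f v \<le> f u"
    using integral_le[OF I Henstock_Kurzweil_Integration.integrable_const_ivl[where c="f c" and a=c and b=d], of ] m assms K[of "f c"] by auto
  show "(d - c) * f d \<le> integral {c..d} f" if m: "\<And>u v. 0 \<le> u \<Longrightarrow> u \<le> v \<Longrightarrow> v \<le> T \<Longrightarrow> f v \<le> f u"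
    using integral_le[OF Henstock_Kurzweil_Integration.integrable_const_ivl[where c="f d" and a=c and b=d] I] m assms K[of "f d"] by auto
  show "integral {c..d} f \<le> (d - c) * f d" if m: "\<And>u v. 0 \<le> u \<Longrightarrow> u \<le> v \<Longrightarrow> v \<le> T \<Longrightarrow> f u \<le> f v"
    using integral_le[OF I Henstock_Kurzweil_Integration.integrable_const_ivl[where c="f d" and a=c and b=d], of ] m assms K[of "f d"] by auto
  show "(d - c) * f c \<le> integral {c..d} f" if m: "\<And>u v. 0 \<le> u \<Longrightarrow> u \<le> v \<Longrightarrow> v \<le> T \<Longrightarrow> f u \<le> f v"
    using integral_le[OF Henstock_Kurzweil_Integration.integrable_const_ivl[where c="f c" and a=c and b=d] I] m assms K[of "f c"] by auto
qed

lemma int_split: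
  fixes f :: "real \<Rightarrow> real"
  assumes cont: "continuous_on {0..T} f" and "0 \<le> c" "c \<le> m" "m \<le> d" "d \<le> T"
  shows "integral {c..d} f = integral {c..m} f + integral {m..d} f"
proof -
  have "f integrable_on {c..d}" using int_bounds(1)[OF cont] assms by auto
  then show ?thesis using Henstock_Kurzweil_Integration.integral_combine[of c m d f] assms by simp
qed

lemma strict_dec:
  fixes f :: "real \<Rightarrow> real"
  assumes cont: "continuous_on {0..T} f" and sm: "strict_antimono_on {0..T} f"
    and "0 \<le> c" "c < d" "d \<le> T"
  shows "integral {c..d} f < (d - c) * f c"
proof -
  have m: "f v \<le> f u" if "0 \<le> u" "u \<le> v" "v \<le> T" for u v
  proof (cases "u = v")
    case False
    then show ?thesis using sm that unfolding monotone_on_def by (smt (verit) atLeastAtMost_iff)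
  qed simp
  define mm where "mm = (c + d) / 2"
  have "c < mm" "mm < d" using assms by (auto simp: mm_def)
  have s: "f mm < f c" using sm \<open>c < mm\<close> \<open>mm < d\<close> assms unfolding monotone_on_def by auto
  have "integral {c..d} f = integral {c..mm} f + integral {mm..d} f"
    using int_split[OF cont] assms \<open>c < mm\<close> \<open>mm < d\<close> by auto
  also have "\<dots> \<le> (mm - c) * f c + (d - mm) * f mm"
    using int_bounds(2)[OF cont, of c mm] int_bounds(2)[OF cont, of mm d] m assms \<open>c < mm\<close> \<open>mm < d\<close>
    by (smt (verit))
  also have "\<dots> < (mm - c) * f c + (d - mm) * f c" using s \<open>mm < d\<close> by simp
  finally show ?thesis by (simp add: algebra_simps)
qed

lemma strict_inc:
  fixes f :: "real \<Rightarrow> real"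
  assumes cont: "continuous_on {0..T} f" and sm: "strict_mono_on {0..T} f"
    and "0 \<le> c" "c < d" "d \<le> T"
  shows "(d - c) * f c < integral {c..d} f"
proof -
  have m: "f u \<le> f v" if "0 \<le> u" "u \<le> v" "v \<le> T" for u v
  proof (cases "u = v")
    case False
    then show ?thesis using sm that unfolding monotone_on_def by (smt (verit) atLeastAtMost_iff)
  qed simp
  define mm where "mm = (c + d) / 2"
  have "c < mm" "mm < d" using assms by (auto simp: mm_def)
  have s: "f c < f mm" using sm \<open>c < mm\<close> \<open>mm < d\<close> assms unfolding monotone_on_def by auto
  have "(d - mm) * f c < (d - mm) * f mm" using s \<open>mm < d\<close> by simp
  hence "(mm - c) * f c + (d - mm) * f c < (mm - c) * f c + (d - mm) * f mm" by simp
  also have "\<dots> \<le> integral {c..mm} f + integral {mm..d} f"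
    using int_bounds(5)[OF cont, of c mm] int_bounds(5)[OF cont, of mm d] m assms \<open>c < mm\<close> \<open>mm < d\<close>
    by (smt (verit))
  also have "\<dots> = integral {c..d} f"
    using int_split[OF cont, of c mm d] assms \<open>c < mm\<close> \<open>mm < d\<close> by auto
  finally show ?thesis by (simp add: algebra_simps)
qed

lemma swap_dec:
  fixes f :: "real \<Rightarrow> real"
  assumes cont: "continuous_on {0..T} f" and sm: "strict_antimono_on {0..T} f"
    and P: "0 \<le> P" "0 < x" "x < y" "P + x + y \<le> T"
  shows "x * integral {0..P+x} f + y * integral {0..P+x+y} f
       < y * integral {0..P+y} f + x * integral {0..P+x+y} f"
proof -
  have m: "f v \<le> f u" if "0 \<le> u" "u \<le> v" "v \<le> T" for u v
  proof (cases "u = v")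
    case False
    then show ?thesis using sm that unfolding monotone_on_def by (smt (verit) atLeastAtMost_iff)
  qed simp
  define I1 where "I1 = integral {P+x..P+y} f"
  define I2 where "I2 = integral {P+y..P+x+y} f"
  have e1: "integral {0..P+y} f = integral {0..P+x} f + I1"
    unfolding I1_def using int_split[OF cont, of 0 "P+x" "P+y"] P by auto
  have e2: "integral {0..P+x+y} f = integral {0..P+y} f + I2"
    unfolding I2_def using int_split[OF cont, of 0 "P+y" "P+x+y"] P by auto
  have b1: "(y - x) * f (P+y) \<le> I1"
    unfolding I1_def using int_bounds(3)[OF cont, of "P+x" "P+y"] m P by auto
  have b2: "I2 < x * f (P+y)"
    unfolding I2_def using strict_dec[OF cont sm, of "P+y" "P+x+y"] P by auto
  have "x * ((y - x) * f (P+y)) \<le> x * I1" using b1 P by simp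
  moreover have "(y - x) * I2 < (y - x) * (x * f (P+y))" using b2 P by simp
  ultimately show ?thesis unfolding e2 e1 by (simp add: algebra_simps)
qed

lemma swap_inc:
  fixes f :: "real \<Rightarrow> real"
  assumes cont: "continuous_on {0..T} f" and sm: "strict_mono_on {0..T} f"
    and P: "0 \<le> P" "0 < y" "y < x" "P + x + y \<le> T"
  shows "x * integral {0..P+x} f + y * integral {0..P+x+y} f
       < y * integral {0..P+y} f + x * integral {0..P+x+y} f"
proof -
  have m: "f u \<le> f v" if "0 \<le> u" "u \<le> v" "v \<le> T" for u v
  proof (cases "u = v")
    case False
    then show ?thesis using sm that unfolding monotone_on_def by (smt (verit) atLeastAtMost_iff)
  qed simp
  define J1 where "J1 = integral {P+y..P+x} f"
  define J2 where "J2 = integral {P+x..P+x+y} f"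
  have e1: "integral {0..P+x} f = integral {0..P+y} f + J1"
    unfolding J1_def using int_split[OF cont, of 0 "P+y" "P+x"] P by auto
  have e2: "integral {0..P+x+y} f = integral {0..P+x} f + J2"
    unfolding J2_def using int_split[OF cont, of 0 "P+x" "P+x+y"] P by auto
  have b1: "J1 \<le> (x - y) * f (P+x)"
    unfolding J1_def using int_bounds(4)[OF cont, of "P+y" "P+x"] m P by auto
  have b2: "y * f (P+x) < J2"
    unfolding J2_def using strict_inc[OF cont sm, of "P+x" "P+x+y"] P by auto
  have "y * J1 \<le> y * ((x - y) * f (P+x))" using b1 P by simp
  moreover have "(x - y) * (y * f (P+x)) < (x - y) * J2" using b2 P by simp
  ultimately show ?thesis unfolding e2 e1 by (simp add: algebra_simps)
qed

fun cst :: "(real \<Rightarrow> real) \<Rightarrow> real \<Rightarrow> real list \<Rightarrow> real" where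
  "cst F P [] = 0"
| "cst F P (y # ys) = y * F (P + y) + cst F (P + y) ys"

lemma ins_lemma:
  fixes h :: "real \<Rightarrow> 'b::linorder"
  assumes sw: "\<And>P x y. 0 \<le> P \<Longrightarrow> 0 < x \<Longrightarrow> 0 < y \<Longrightarrow> P + x + y \<le> T \<Longrightarrow> h x < h y \<Longrightarrow>
        x * F (P + x) + y * F (P + x + y) < y * F (P + y) + x * F (P + x + y)"
  shows "0 \<le> P \<Longrightarrow> (\<forall>z\<in>set (y # zs). 0 < z) \<Longrightarrow> P + y + sum_list zs \<le> T \<Longrightarrow>
    cst F P (insort_key h y zs) \<le> cst F P (y # zs) \<and>
    (insort_key h y zs \<noteq> y # zs \<longrightarrow> cst F P (insort_key h y zs) < cst F P (y # zs))"
proof (induction zs arbitrary: P)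
  case Nil
  then show ?case by simp
next
  case (Cons z zs)
  show ?case
  proof (cases "h y \<le> h z")
    case True
    then show ?thesis by simp
  next
    case False
    have pos: "\<forall>w\<in>set zs. 0 < w" using Cons.prems by auto
    have sz: "0 \<le> sum_list zs" using pos by (meson less_imp_le sum_list_nonneg)
    have IH: "cst F (P + z) (insort_key h y zs) \<le> cst F (P + z) (y # zs)"
      using Cons.IH[of "P + z"] Cons.prems by auto
    have "cst F P (insort_key h y (z # zs)) = z * F (P + z) + cst F (P + z) (insort_key h y zs)"
      using False by simp
    also have "\<dots> \<le> z * F (P + z) + cst F (P + z) (y # zs)" using IH by simp
    also have "\<dots> = z * F (P + z) + y * F (P + z + y) + cst F (P + z + y) zs" by simp
    also have "\<dots> < y * F (P + y) + z * F (P + y + z) + cst F (P + y + z) zs"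
      using sw[of P z y] Cons.prems False sz by (simp add: add_ac)
    also have "\<dots> = cst F P (y # z # zs)" by simp
    finally show ?thesis by simp
  qed
qed

lemma sort_lemma:
  fixes h :: "real \<Rightarrow> 'b::linorder"
  assumes sw: "\<And>P x y. 0 \<le> P \<Longrightarrow> 0 < x \<Longrightarrow> 0 < y \<Longrightarrow> P + x + y \<le> T \<Longrightarrow> h x < h y \<Longrightarrow>
        x * F (P + x) + y * F (P + x + y) < y * F (P + y) + x * F (P + x + y)"
  shows "0 \<le> P \<Longrightarrow> (\<forall>z\<in>set ys. 0 < z) \<Longrightarrow> P + sum_list ys \<le> T \<Longrightarrow>
    cst F P (sort_key h ys) \<le> cst F P ys \<and>
    (sort_key h ys \<noteq> ys \<longrightarrow> cst F P (sort_key h ys) < cst F P ys)"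
proof (induction ys arbitrary: P)
  case Nil
  then show ?case by simp
next
  case (Cons y ys)
  define s where "s = sort_key h ys"
  have sums: "sum_list s = sum_list ys" unfolding s_def
    by (metis mset_sort sum_mset_sum_list)
  have sets: "set s = set ys" unfolding s_def by simp
  have IH: "cst F (P + y) s \<le> cst F (P + y) ys \<and> (s \<noteq> ys \<longrightarrow> cst F (P + y) s < cst F (P + y) ys)"
    using Cons.IH[of "P + y"] Cons.prems unfolding s_def by (auto simp: add_ac)
  have ins: "cst F P (insort_key h y s) \<le> cst F P (y # s) \<and>
    (insort_key h y s \<noteq> y # s \<longrightarrow> cst F P (insort_key h y s) < cst F P (y # s))"
    using ins_lemma[OF sw, where P=P and y=y and zs=s] Cons.prems sums sets by (auto simp: add_ac)
  have eq: "sort_key h (y # ys) = insort_key h y s" unfolding s_def by simp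
  show ?case unfolding eq using IH ins by auto
qed

lemma cst_snoc: "cst F P (xs @ [x]) = cst F P xs + x * F (P + sum_list xs + x)"
  by (induction xs arbitrary: P) (auto simp: add_ac)

lemma cst_map: "cst F 0 (map g [1..<Suc m]) = (\<Sum>i=1..m. g i * F (\<Sum>k=1..i. g k))"
proof (induction m)
  case 0
  then show ?case by simp
next
  case (Suc m)
  have sl: "sum_list (map g [1..<Suc m]) = (\<Sum>k=1..m. g k)"
    by (metis atLeastLessThanSuc_atLeastAtMost set_upt sum_set_upt_conv_sum_list_nat)
  have up: "[1..<Suc (Suc m)] = [1..<Suc m] @ [Suc m]" by simp
  have "cst F 0 (map g [1..<Suc (Suc m)]) = cst F 0 (map g [1..<Suc m]) + g (Suc m) * F (0 + sum_list (map g [1..<Suc m]) + g (Suc m))"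
    by (simp only: up map_append list.map cst_snoc)
  then show ?case using Suc sl by (simp del: upt_Suc)
qed

lemma final_gen:
  fixes h :: "real \<Rightarrow> 'b::linorder" and a g :: "nat \<Rightarrow> real"
  assumes sw: "\<And>P x y. 0 \<le> P \<Longrightarrow> 0 < x \<Longrightarrow> 0 < y \<Longrightarrow> P + x + y \<le> (\<Sum>k=1..n. a k) \<Longrightarrow> h x < h y \<Longrightarrow>
        x * F (P + x) + y * F (P + x + y) < y * F (P + y) + x * F (P + x + y)"
    and injh: "inj h"
    and pi: "\<pi> permutes {1..n}"
    and apos: "\<And>i. 1 \<le> i \<Longrightarrow> i \<le> n \<Longrightarrow> 0 < a i"
    and ainj: "inj_on a {1..n}"
    and gs: "sorted_wrt (<) (map h (map g [1..<Suc n]))"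
    and gset: "g ` {1..n} = a ` {1..n}"
    and ne: "\<exists>i\<in>{1..n}. a (\<pi> i) \<noteq> g i"
  shows "cst F 0 (map g [1..<Suc n]) < cst F 0 (map (a \<circ> \<pi>) [1..<Suc n])"
proof -
  define L where "L = [1..<Suc n]"
  define ys where "ys = map (a \<circ> \<pi>) L"
  have setL: "set L = {1..n}" unfolding L_def by auto
  have pim: "\<pi> ` {1..n} = {1..n}" using permutes_image[OF pi] .
  have pinj: "inj_on \<pi> {1..n}" using pi by (meson injD inj_onI permutes_inj)
  have "set ys = (a \<circ> \<pi>) ` {1..n}" unfolding ys_def using setL by simp
  also have "\<dots> = a ` (\<pi> ` {1..n})" by (rule image_comp[symmetric])
  finally have setys: "set ys = a ` {1..n}" using pim by simp
  have "inj_on (a \<circ> \<pi>) {1..n}" using comp_inj_on[OF pinj] ainj pim by simp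
  moreover have "distinct L" unfolding L_def by simp
  ultimately have dys: "distinct ys" unfolding ys_def using setL by (simp add: distinct_map)
  have pos: "\<forall>z\<in>set ys. 0 < z" using setys apos by auto
  have sumys: "sum_list ys = (\<Sum>k=1..n. a k)"
  proof -
    have "sum_list ys = sum (a \<circ> \<pi>) {1..n}" unfolding ys_def L_def
      by (metis atLeastLessThanSuc_atLeastAtMost set_upt sum_set_upt_conv_sum_list_nat)
    also have "\<dots> = sum a {1..n}" using sum.permute[OF pi, of a] by simp
    finally show ?thesis .
  qed
  have S: "cst F 0 (sort_key h ys) \<le> cst F 0 ys \<and>
    (sort_key h ys \<noteq> ys \<longrightarrow> cst F 0 (sort_key h ys) < cst F 0 ys)"
    using sort_lemma[where h=h and F=F and T="\<Sum>k=1..n. a k", OF sw, where P=0 and ys=ys] pos sumys by simp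
  have eqs: "sort_key h ys = map g L"
  proof -
    have "map h (sort_key h ys) = map h (map g L)"
    proof (rule sorted_distinct_set_unique)
      show "sorted (map h (sort_key h ys))" by simp
      show "distinct (map h (sort_key h ys))" using dys injh
        by (simp add: distinct_map inj_on_subset[OF injh])
      show "sorted (map h (map g L))" "distinct (map h (map g L))"
        using gs unfolding L_def strict_sorted_iff by auto
      have "set (map h (sort_key h ys)) = h ` set ys" by simp
      also have "\<dots> = h ` (g ` {1..n})" using setys gset by simp
      also have "\<dots> = set (map h (map g L))" using setL by (simp only: set_map)
      finally show "set (map h (sort_key h ys)) = set (map h (map g L))" .
    qed
    then show ?thesis using injh by (simp del: map_map)
  qed
  have neq: "ys \<noteq> map g L"
  proof
    assume e: "ys = map g L"
    obtain i where i: "i \<in> {1..n}" "a (\<pi> i) \<noteq> g i" using ne by blast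
    have "ys ! (i - 1) = map g L ! (i - 1)" using e by simp
    moreover have "ys ! (i - 1) = a (\<pi> i)" "map g L ! (i - 1) = g i"
      using i unfolding ys_def L_def by (auto simp del: upt_Suc)
    ultimately show False using i by simp
  qed
  have "cst F 0 (map g L) < cst F 0 ys" using S eqs neq by simp
  then show ?thesis unfolding ys_def L_def .
qed

theorem lemma3:
  fixes a :: "nat \<Rightarrow> real" and n :: nat and f :: "real \<Rightarrow> real"
  assumes a_pos: "0 < a 1"
    and a_incr: "\<And>i. 1 \<le> i \<Longrightarrow> i < n \<Longrightarrow> a i < a (Suc i)"
    and f_pos: "\<And>x. 0 \<le> x \<Longrightarrow> 0 < f x"
    and f_diff: "\<And>x. 0 \<le> x \<Longrightarrow> f differentiable (at x within {0..})"
    and f_inf: "0 < Inf (f ` {0..})"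
    and f_sup: "bdd_above (f ` {0..})"
  shows
    "(strict_antimono_on {0..(\<Sum>k=1..n. a k)} f \<longrightarrow>
        (\<forall>\<pi>. \<pi> permutes {1..n} \<and> (\<exists>i\<in>{1..n}. \<pi> i \<noteq> i) \<longrightarrow>
           (\<Sum>i=1..n. a i * integral {0..(\<Sum>k=1..i. a k)} f)
             < (\<Sum>i=1..n. a (\<pi> i) * integral {0..(\<Sum>k=1..i. a (\<pi> k))} f)))
     \<and>
     (strict_mono_on {0..(\<Sum>k=1..n. a k)} f \<longrightarrow>
        (\<forall>\<pi>. \<pi> permutes {1..n} \<and> (\<exists>i\<in>{1..n}. \<pi> i \<noteq> n + 1 - i) \<longrightarrow>
           (\<Sum>i=1..n. a (n + 1 - i) * integral {0..(\<Sum>k=n+1-i..n. a k)} f)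
             < (\<Sum>i=1..n. a (\<pi> i) * integral {0..(\<Sum>k=1..i. a (\<pi> k))} f)))"
proof -
  define T where "T = (\<Sum>k=1..n. a k)"
  define F where "F = (\<lambda>t. integral {0..t} f)"
  have amono: "a i < a j" if "1 \<le> i" "i < j" "j \<le> n" for i j
    using that
  proof (induction j)
    case 0 then show ?case by simp
  next
    case (Suc j)
    show ?case
    proof (cases "i = j")
      case True then show ?thesis using a_incr Suc.prems by simp
    next
      case False
      then have "a i < a j" using Suc by simp
      also have "a j < a (Suc j)" using a_incr Suc.prems False by simp
      finally show ?thesis .
    qed
  qed
  have apos: "0 < a i" if "1 \<le> i" "i \<le> n" for i
    using a_pos amono[of 1 i] that by (cases "i = 1") auto
  have ainj: "inj_on a {1..n}"
    by (rule inj_onI) (metis amono atLeastAtMost_iff less_irrefl linorder_neqE_nat)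
  have cont: "continuous_on {0..T} f"
  proof -
    have "continuous_on {0..} f"
      using f_diff differentiable_imp_continuous_within continuous_on_eq_continuous_within by blast
    then show ?thesis by (rule continuous_on_subset) auto
  qed
  have rhs: "(\<Sum>i=1..n. a (\<pi> i) * integral {0..(\<Sum>k=1..i. a (\<pi> k))} f)
      = cst F 0 (map (a \<circ> \<pi>) [1..<Suc n])" for \<pi>
    using cst_map[of F "a \<circ> \<pi>" n] unfolding F_def by simp
  have P1: "(\<Sum>i=1..n. a i * integral {0..(\<Sum>k=1..i. a k)} f)
             < (\<Sum>i=1..n. a (\<pi> i) * integral {0..(\<Sum>k=1..i. a (\<pi> k))} f)"
    if sm: "strict_antimono_on {0..T} f" and pi: "\<pi> permutes {1..n}"
      and ne: "\<exists>i\<in>{1..n}. \<pi> i \<noteq> i" for \<pi>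
  proof -
    have "cst F 0 (map a [1..<Suc n]) < cst F 0 (map (a \<circ> \<pi>) [1..<Suc n])"
    proof (rule final_gen[where h="\<lambda>x. x" and n=n])
      show "\<And>P x y. 0 \<le> P \<Longrightarrow> 0 < x \<Longrightarrow> 0 < y \<Longrightarrow> P + x + y \<le> (\<Sum>k=1..n. a k) \<Longrightarrow> x < y \<Longrightarrow>
        x * F (P + x) + y * F (P + x + y) < y * F (P + y) + x * F (P + x + y)"
        unfolding F_def using swap_dec[OF cont sm] unfolding T_def by blast
      show "sorted_wrt (<) (map (\<lambda>x. x) (map a [1..<Suc n]))"
        unfolding sorted_wrt_map
        by (rule sorted_wrt_mono_rel[OF _ sorted_wrt_upt[of 1 "Suc n"]]) (auto intro: amono)
      show "\<exists>i\<in>{1..n}. a (\<pi> i) \<noteq> a i"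
        using ne ainj permutes_image[OF pi] by (metis imageI inj_onD)
    qed (use pi apos ainj in auto)
    moreover have "cst F 0 (map a [1..<Suc n]) = (\<Sum>i=1..n. a i * integral {0..(\<Sum>k=1..i. a k)} f)"
      using cst_map[of F a n] unfolding F_def by simp
    ultimately show ?thesis using rhs[of \<pi>] by simp
  qed
  have reidx: "(\<Sum>k=1..i. a (n + 1 - k)) = (\<Sum>k=n+1-i..n. a k)" if "i \<le> n" for i
    using that
  proof (induction i)
    case 0 then show ?case by simp
  next
    case (Suc i)
    have "(\<Sum>k=1..Suc i. a (n + 1 - k)) = (\<Sum>k=1..i. a (n + 1 - k)) + a (n - i)" by simp
    also have "\<dots> = (\<Sum>k=n+1-i..n. a k) + a (n - i)" using Suc by simp
    also have "\<dots> = (\<Sum>k=n-i..n. a k)"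
      using sum.atLeast_Suc_atMost[of "n - i" n a] Suc.prems
      by (simp add: Suc_diff_le)
    finally show ?case by simp
  qed
  have P2: "(\<Sum>i=1..n. a (n + 1 - i) * integral {0..(\<Sum>k=n+1-i..n. a k)} f)
             < (\<Sum>i=1..n. a (\<pi> i) * integral {0..(\<Sum>k=1..i. a (\<pi> k))} f)"
    if sm: "strict_mono_on {0..T} f" and pi: "\<pi> permutes {1..n}"
      and ne: "\<exists>i\<in>{1..n}. \<pi> i \<noteq> n + 1 - i" for \<pi>
  proof -
    define g where "g = (\<lambda>i. a (n + 1 - i))"
    have rim: "(\<lambda>i. n + 1 - i) ` {1..n} = {1..n}"
    proof
      show "(\<lambda>i. n + 1 - i) ` {1..n} \<subseteq> {1..n}" by auto
      show "{1..n} \<subseteq> (\<lambda>i. n + 1 - i) ` {1..n}"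
      proof
        fix x assume x: "x \<in> {1..n}"
        then have "x = n + 1 - (n + 1 - x)" "n + 1 - x \<in> {1..n}" by auto
        then show "x \<in> (\<lambda>i. n + 1 - i) ` {1..n}" by blast
      qed
    qed
    have "cst F 0 (map g [1..<Suc n]) < cst F 0 (map (a \<circ> \<pi>) [1..<Suc n])"
    proof (rule final_gen[where h="uminus" and n=n])
      show "\<And>P x y. 0 \<le> P \<Longrightarrow> 0 < x \<Longrightarrow> 0 < y \<Longrightarrow> P + x + y \<le> (\<Sum>k=1..n. a k) \<Longrightarrow> - x < - y \<Longrightarrow>
        x * F (P + x) + y * F (P + x + y) < y * F (P + y) + x * F (P + x + y)"
        unfolding F_def using swap_inc[OF cont sm] unfolding T_def by simp
      show "sorted_wrt (<) (map uminus (map g [1..<Suc n]))"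
        unfolding sorted_wrt_map g_def
      proof (rule sorted_wrt_mono_rel[OF _ sorted_wrt_upt[of 1 "Suc n"]])
        fix i j assume ij: "i \<in> set [1..<Suc n]" "j \<in> set [1..<Suc n]" "i < j"
        then have "1 \<le> i" "j \<le> n" "i < j" by auto
        then have "1 \<le> n + 1 - j" "n + 1 - j < n + 1 - i" "n + 1 - i \<le> n" by arith+
        then show "- a (n + 1 - i) < - a (n + 1 - j)" using amono[of "n + 1 - j" "n + 1 - i"] by simp
      qed
      show "g ` {1..n} = a ` {1..n}"
      proof -
        have "a ` ((\<lambda>i. n + 1 - i) ` {1..n}) = g ` {1..n}" unfolding g_def by (rule image_image)
        then show ?thesis using rim by simp
      qed
      show "\<exists>i\<in>{1..n}. a (\<pi> i) \<noteq> g i"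
      proof -
        obtain i where i: "i \<in> {1..n}" "\<pi> i \<noteq> n + 1 - i" using ne by blast
        have "\<pi> i \<in> {1..n}" using permutes_image[OF pi] i by blast
        moreover have "n + 1 - i \<in> {1..n}" using i by auto
        ultimately have "a (\<pi> i) \<noteq> g i" using i ainj unfolding g_def by (meson inj_onD)
        then show ?thesis using i by blast
      qed
    qed (use pi apos ainj in auto)
    moreover have "cst F 0 (map g [1..<Suc n]) = (\<Sum>i=1..n. a (n + 1 - i) * integral {0..(\<Sum>k=n+1-i..n. a k)} f)"
    proof -
      have "(\<Sum>i=1..n. g i * F (\<Sum>k=1..i. g k)) = (\<Sum>i=1..n. a (n + 1 - i) * integral {0..(\<Sum>k=n+1-i..n. a k)} f)"
      proof (rule sum.cong)
        fix i assume "i \<in> {1..n}"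
        then have "(\<Sum>k=1..i. g k) = (\<Sum>k=n+1-i..n. a k)" unfolding g_def using reidx by simp
        then show "g i * F (\<Sum>k=1..i. g k) = a (n + 1 - i) * integral {0..(\<Sum>k=n+1-i..n. a k)} f"
          unfolding F_def g_def by simp
      qed simp
      then show ?thesis using cst_map[of F g n] by simp
    qed
    ultimately show ?thesis using rhs[of \<pi>] by simp
  qed
  show ?thesis using P1 P2 unfolding T_def by blast
qed

end
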